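(* Let $\mathcal{SP}$ be the gap-insertion operad of set partitions and $\mathcal{NCP}\subset\mathcal{SP}$ its sub-operad of noncrossing partitions (defined in the context). Then the inclusion $i:\mathcal{NCP}\to\mathcal{SP}$ and the noncrossing closure $\operatorname{nc}:\mathcal{SP}\to\mathcal{NCP}$ are both morphisms of operads, and $\operatorname{nc}\circ i=\operatorname{Id}$, exhibiting $\mathcal{NCP}$ as a retract of $\mathcal{SP}$.
   Context: A partition of degree $n$ is a set partition of $[n]=\{1,\dots,n\}$ into nonempty blocks (for $n=0$ only the empty partition $\emptyset$); partitions of other finite linearly ordered sets are identified with partitions of $[n]$ via the order-preserving bijection. A partition is noncrossing if there are no $a<c<b<d$ with $a,b$ in one block and $c,d$ in a different block. Partitions of $[n]$ are ordered by refinement ($P\leq Q$ if every block of $Q$ is a union of blocks of $P$). The noncrossing closure $\operatorname{nc}(P)$ of a partition $P$ of $[n]$ is the finest noncrossing partition $Q$ of $[n]$ with $P\leq Q$. The gap-insertion operad $\mathcal{SP}$ is the non-symmetric set operad with $\mathcal{SP}(0)=\emptyset$ and, for $n\geq 1$, $\mathcal{SP}(n)$ the set of partitions of $[n-1]$ ($\mathcal{SP}(1)=\{\emptyset\}$, the unit). The partial composition, for $P=\{\pi_1,\dots,\pi_k\}\in\mathcal{SP}(m)$, $Q=\{\rho_1,\dots,\rho_l\}\in\mathcal{SP}(n)$, $i\in[m]$, is $P\diamond_i Q=\{\chi(\pi_1),\dots,\chi(\pi_k),\rho_1+i-1,\dots,\rho_l+i-1\}$ with $\chi(p)=p$ if $p<i$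 and $\chi(p)=p+n-1$ otherwise (insertion of $Q$ into the $i$-th gap of $P$). The noncrossing partitions form a sub-operad $\mathcal{NCP}$. *)

theory Defs
  imports Main
begin

definition is_partition :: "nat \<Rightarrow> nat set set \<Rightarrow> bool" where
  "is_partition n P \<longleftrightarrow>
     (\<forall>B\<in>P. B \<noteq> {}) \<and>
     (\<forall>B\<in>P. \<forall>C\<in>P. B \<noteq> C \<longrightarrow> B \<inter> C = {}) \<and>
     \<Union>P = {1..n}"

definition noncrossing :: "nat set set \<Rightarrow> bool" where
  "noncrossing P \<longleftrightarrow>
     \<not> (\<exists>B1\<in>P. \<exists>B2\<in>P. B1 \<noteq> B2 \<and>
          (\<exists>a b c d. a < c \<and> c < b \<and> b < d \<and> a \<in> B1 \<and> b \<in> B1 \<and> c \<in> B2 \<and> d \<in> B2))"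

definition refines :: "nat set set \<Rightarrow> nat set set \<Rightarrow> bool" where
  "refines P Q \<longleftrightarrow> (\<forall>B\<in>Q. \<exists>S\<subseteq>P. B = \<Union>S)"

definition nc :: "nat \<Rightarrow> nat set set \<Rightarrow> nat set set" where
  "nc n P = (THE Q. is_partition n Q \<and> noncrossing Q \<and> refines P Q \<and>
      (\<forall>Q'. is_partition n Q' \<and> noncrossing Q' \<and> refines P Q' \<longrightarrow> refines Q Q'))"

definition SP :: "nat \<Rightarrow> nat set set set" where
  "SP m = {P. 1 \<le> m \<and> is_partition (m - 1) P}"

definition NCP :: "nat \<Rightarrow> nat set set set" where
  "NCP m = {P \<in> SP m. noncrossing P}"

definition SP_unit :: "nat set set" where
  "SP_unit = {}"

text \<open>Partial composition P \<diamond>_i Q for Q \<in> SP(n): insertion of Q into the i-th gap of P.\<close>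
definition SP_comp :: "nat set set \<Rightarrow> nat \<Rightarrow> nat \<Rightarrow> nat set set \<Rightarrow> nat set set" where
  "SP_comp P i n Q =
     (\<lambda>B. (\<lambda>p. if p < i then p else p + n - 1) ` B) ` P \<union>
     (\<lambda>B. (\<lambda>r. r + i - 1) ` B) ` Q"

definition nc_op :: "nat \<Rightarrow> nat set set \<Rightarrow> nat set set" where
  "nc_op m P = nc (m - 1) P"

end

theory Submission
  imports Defs
begin


lemma part_ne: "is_partition n P \<Longrightarrow> B \<in> P \<Longrightarrow> B \<noteq> {}"
  unfolding is_partition_def by blast
lemma part_eq: "is_partition n P \<Longrightarrow> B \<in> P \<Longrightarrow> C \<in> P \<Longrightarrow> x \<in> B \<Longrightarrow> x \<in> C \<Longrightarrow> B = C"
  unfolding is_partition_def by blast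
lemma part_sub: "is_partition n P \<Longrightarrow> B \<in> P \<Longrightarrow> B \<subseteq> {1..n}"
  unfolding is_partition_def by blast
lemma part_cov: "is_partition n P \<Longrightarrow> x \<in> {1..n} \<Longrightarrow> \<exists>B\<in>P. x \<in> B"
  unfolding is_partition_def by blast
lemma part_mem: "is_partition n P \<Longrightarrow> B \<in> P \<Longrightarrow> x \<in> B \<Longrightarrow> x \<in> {1..n}"
  unfolding is_partition_def by blast

lemma noncrossingD:
  assumes "noncrossing Q" "B1 \<in> Q" "B2 \<in> Q" "a < c" "c < b" "b < d"
    "a \<in> B1" "b \<in> B1" "c \<in> B2" "d \<in> B2"
  shows "B1 = B2"
proof (rule ccontr)
  assume ne: "B1 \<noteq> B2"
  have ex: "\<exists>a b c d. a < c \<and> c < b \<and> b < d \<and> a \<in> B1 \<and> b \<in> B1 \<and> c \<in> B2 \<and> d \<in> B2"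
    using assms(4-10) by (intro exI conjI)
  have "\<exists>B1\<in>Q. \<exists>B2\<in>Q. B1 \<noteq> B2 \<and>
          (\<exists>a b c d. a < c \<and> c < b \<and> b < d \<and> a \<in> B1 \<and> b \<in> B1 \<and> c \<in> B2 \<and> d \<in> B2)"
    apply (rule bexI[where x=B1])
    apply (rule bexI[where x=B2])
      apply (rule conjI[OF ne ex])
     apply (rule assms(3))
    apply (rule assms(2))
    done
  then show False using assms(1) unfolding noncrossing_def by simp
qed
lemma noncrossingI:
  assumes "\<And>B1 B2 a b c d. B1 \<in> Q \<Longrightarrow> B2 \<in> Q \<Longrightarrow> a < c \<Longrightarrow> c < b \<Longrightarrow> b < d \<Longrightarrow>
    a \<in> B1 \<Longrightarrow> b \<in> B1 \<Longrightarrow> c \<in> B2 \<Longrightarrow> d \<in> B2 \<Longrightarrow> B1 = B2"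
  shows "noncrossing Q"
  unfolding noncrossing_def
proof (intro notI, elim bexE exE conjE)
  fix B1 B2 a b c d assume *: "B1 \<in> Q" "B2 \<in> Q" "B1 \<noteq> B2" "a < c" "c < b" "b < d"
    "a \<in> B1" "b \<in> B1" "c \<in> B2" "d \<in> B2"
  show False using assms[OF *(1,2,4-10)] *(3) by simp
qed
lemma refinesD: "refines P Q \<Longrightarrow> B \<in> Q \<Longrightarrow> \<exists>S. S \<subseteq> P \<and> B = \<Union>S"
  unfolding refines_def by simp
lemma refines_alt:
  assumes A: "is_partition n A" and B: "is_partition n B"
  shows "refines A B \<longleftrightarrow> (\<forall>a\<in>A. \<exists>b\<in>B. a \<subseteq> b)"
proof
  assume r: "refines A B"
  show "\<forall>a\<in>A. \<exists>b\<in>B. a \<subseteq> b"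
  proof
    fix a assume a: "a \<in> A"
    obtain x where x: "x \<in> a" using part_ne[OF A a] by blast
    obtain b where b: "b \<in> B" "x \<in> b" using part_cov[OF B part_mem[OF A a x]] by blast
    obtain S where S: "S \<subseteq> A" "b = \<Union>S" using refinesD[OF r b(1)] by (elim exE conjE)
    have "x \<in> \<Union>S" using b(2) S(2) by simp
    then obtain a' where a': "a' \<in> S" "x \<in> a'" by blast
    have "a' \<in> A" using S(1) a'(1) by blast
    have "a' = a" using part_eq[OF A \<open>a' \<in> A\<close> a a'(2) x] .
    have "a \<subseteq> \<Union>S" using a'(1) \<open>a' = a\<close> by blast
    then have "a \<subseteq> b" by (simp add: S(2))
    then show "\<exists>b\<in>B. a \<subseteq> b" using b(1) by blast
  qed
next
  assume s: "\<forall>a\<in>A. \<exists>b\<in>B. a \<subseteq> b"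
  show "refines A B" unfolding refines_def
  proof
    fix b assume b: "b \<in> B"
    have 1: "b \<subseteq> \<Union>{a\<in>A. a \<subseteq> b}"
    proof
      fix x assume x: "x \<in> b"
      obtain a where a: "a \<in> A" "x \<in> a" using part_cov[OF A part_mem[OF B b x]] by blast
      obtain b' where b': "b' \<in> B" "a \<subseteq> b'" using s a(1) by blast
      have "x \<in> b'" using a(2) b'(2) by blast
      have "b' = b" using part_eq[OF B b'(1) b \<open>x \<in> b'\<close> x] .
      then have "a \<subseteq> b" using b'(2) by simp
      then show "x \<in> \<Union>{a\<in>A. a \<subseteq> b}" using a by blast
    qed
    have 2: "\<Union>{a\<in>A. a \<subseteq> b} \<subseteq> b" by blast
    have "b = \<Union>{a\<in>A. a \<subseteq> b}" using 1 2 by (rule equalityI)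
    moreover have "{a\<in>A. a \<subseteq> b} \<subseteq> A" by blast
    ultimately show "\<exists>S\<subseteq>A. b = \<Union>S" by blast
  qed
qed

lemma refines_antisym:
  assumes A: "is_partition n A" and B: "is_partition n B"
    and "refines A B" "refines B A"
  shows "A = B"
proof -
  have ab: "\<forall>a\<in>A. \<exists>b\<in>B. a \<subseteq> b" and ba: "\<forall>b\<in>B. \<exists>a\<in>A. b \<subseteq> a"
    using assms refines_alt[OF A B] refines_alt[OF B A] by auto
  have 1: "x \<in> Y" if X: "is_partition n X" "is_partition n Y"
     "\<forall>a\<in>X. \<exists>b\<in>Y. a \<subseteq> b" "\<forall>b\<in>Y. \<exists>a\<in>X. b \<subseteq> a" "x \<in> X" for X Y x
  proof -
    obtain y where y: "y \<in> Y" "x \<subseteq> y" using X by blast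
    obtain x' where x': "x' \<in> X" "y \<subseteq> x'" using X y by blast
    have "x \<noteq> {}" using part_ne[OF X(1) X(5)] .
    then obtain z where "z \<in> x" by blast
    then have "x = x'" using part_eq[OF X(1) X(5) x'(1), of z] x' y by blast
    then show ?thesis using x' y by auto
  qed
  show ?thesis using 1[OF A B ab ba] 1[OF B A ba ab] by blast
qed

definition ncset :: "nat \<Rightarrow> nat set set \<Rightarrow> nat set set set" where
  "ncset n P = {Q'. is_partition n Q' \<and> noncrossing Q' \<and> refines P Q'}"

lemma ncsetD: "Q' \<in> ncset n P \<Longrightarrow> is_partition n Q' \<and> noncrossing Q' \<and> refines P Q'"
  unfolding ncset_def by simp

lemma nc_exists:
  assumes P: "is_partition n P"
  shows "\<exists>Q. is_partition n Q \<and> noncrossing Q \<and> refines P Q \<and>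
      (\<forall>Q'. is_partition n Q' \<and> noncrossing Q' \<and> refines P Q' \<longrightarrow> refines Q Q')"
proof -
  define rel where "rel x y \<longleftrightarrow> x \<in> {1..n} \<and> y \<in> {1..n} \<and>
      (\<forall>Q'\<in>ncset n P. \<exists>C\<in>Q'. x \<in> C \<and> y \<in> C)" for x y
  have relI: "rel x y" if "x \<in> {1..n}" "y \<in> {1..n}"
     "\<And>Q'. Q' \<in> ncset n P \<Longrightarrow> \<exists>C\<in>Q'. x \<in> C \<and> y \<in> C" for x y
    using that unfolding rel_def by blast
  have relD: "\<exists>C\<in>Q'. x \<in> C \<and> y \<in> C" if "rel x y" "Q' \<in> ncset n P" for x y Q'
    using that unfolding rel_def by blast
  have relN: "x \<in> {1..n}" "y \<in> {1..n}" if "rel x y" for x y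
    using that unfolding rel_def by blast+
  define cl where "cl x = {y. rel x y}" for x
  have cl_iff: "y \<in> cl x \<longleftrightarrow> rel x y" for x y unfolding cl_def by simp
  define Q where "Q = cl ` {1..n}"
  have refl: "rel x x" if "x \<in> {1..n}" for x
  proof (rule relI[OF that that])
    fix Q' assume "Q' \<in> ncset n P"
    then have "is_partition n Q'" using ncsetD by blast
    then show "\<exists>C\<in>Q'. x \<in> C \<and> x \<in> C" using part_cov that by blast
  qed
  have sym: "rel y x" if "rel x y" for x y
  proof (rule relI)
    show "y \<in> {1..n}" "x \<in> {1..n}" using relN[OF that] by auto
    fix Q' assume "Q' \<in> ncset n P"
    then show "\<exists>C\<in>Q'. y \<in> C \<and> x \<in> C" using relD[OF that] by blast
  qed
  have trans: "rel x z" if xy: "rel x y" and yz: "rel y z" for x y z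
  proof (rule relI)
    show "x \<in> {1..n}" "z \<in> {1..n}" using relN[OF xy] relN[OF yz] by auto
    fix Q' assume Q': "Q' \<in> ncset n P"
    obtain C where C: "C \<in> Q'" "x \<in> C" "y \<in> C" using relD[OF xy Q'] by blast
    obtain C' where C': "C' \<in> Q'" "y \<in> C'" "z \<in> C'" using relD[OF yz Q'] by blast
    have "is_partition n Q'" using Q' ncsetD by blast
    then have "C = C'" using part_eq C(1) C'(1) C(3) C'(2) by blast
    then show "\<exists>C\<in>Q'. x \<in> C \<and> z \<in> C" using C C' by blast
  qed
  have cleq: "cl x = cl y" if "rel x y" for x y
  proof
    show "cl x \<subseteq> cl y" using trans sym that cl_iff by blast
    show "cl y \<subseteq> cl x" using trans sym that cl_iff by blast
  qed
  have part: "is_partition n Q"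
    unfolding is_partition_def
  proof (intro conjI)
    show "\<forall>B\<in>Q. B \<noteq> {}"
    proof
      fix B assume "B \<in> Q"
      then obtain x where x: "x \<in> {1..n}" "B = cl x" unfolding Q_def by blast
      have "x \<in> cl x" using refl[OF x(1)] cl_iff by blast
      then show "B \<noteq> {}" using x(2) by blast
    qed
    show "\<forall>B\<in>Q. \<forall>C\<in>Q. B \<noteq> C \<longrightarrow> B \<inter> C = {}"
    proof (intro ballI impI)
      fix B C assume "B \<in> Q" "C \<in> Q" "B \<noteq> C"
      then obtain x y where xy: "B = cl x" "C = cl y" unfolding Q_def by blast
      show "B \<inter> C = {}"
      proof (rule ccontr)
        assume "B \<inter> C \<noteq> {}"
        then obtain z where "z \<in> cl x" "z \<in> cl y" using xy by blast
        then have "rel x z" "rel y z" using cl_iff by blast+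
        then have "cl x = cl y" using cleq by metis
        then show False using xy \<open>B \<noteq> C\<close> by simp
      qed
    qed
    show "\<Union>Q = {1..n}"
    proof
      show "\<Union>Q \<subseteq> {1..n}" unfolding Q_def using cl_iff relN by blast
      show "{1..n} \<subseteq> \<Union>Q"
      proof
        fix x assume x: "x \<in> {1..n}"
        then have "x \<in> cl x" using refl cl_iff by blast
        then show "x \<in> \<Union>Q" unfolding Q_def using x by blast
      qed
    qed
  qed
  have ref: "refines P Q"
    unfolding refines_alt[OF P part]
  proof
    fix B assume B: "B \<in> P"
    then obtain x where x: "x \<in> B" using part_ne[OF P] by blast
    have xn: "x \<in> {1..n}" using part_mem[OF P B x] .
    have "B \<subseteq> cl x"
    proof
      fix y assume y: "y \<in> B"
      have yn: "y \<in> {1..n}" using part_mem[OF P B y] .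
      have "rel x y"
      proof (rule relI[OF xn yn])
        fix Q' assume "Q' \<in> ncset n P"
        then have Q': "is_partition n Q'" "refines P Q'" using ncsetD by blast+
        obtain C where "C \<in> Q'" "B \<subseteq> C" using refines_alt[OF P Q'(1)] Q'(2) B by blast
        then show "\<exists>C\<in>Q'. x \<in> C \<and> y \<in> C" using x y by blast
      qed
      then show "y \<in> cl x" using cl_iff by blast
    qed
    then show "\<exists>b\<in>Q. B \<subseteq> b" unfolding Q_def using xn by blast
  qed
  have ncr: "noncrossing Q"
  proof (rule noncrossingI)
    fix B1 B2 a b c d assume X: "B1 \<in> Q" "B2 \<in> Q"
      "a < c" "c < b" "b < d" "a \<in> B1" "b \<in> B1" "c \<in> B2" "d \<in> B2"
    obtain x1 where x1: "B1 = cl x1" using X(1) unfolding Q_def by blast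
    obtain x2 where x2: "B2 = cl x2" using X(2) unfolding Q_def by blast
    have r1: "rel x1 a" "rel x1 b" using X(6,7) x1 cl_iff by blast+
    have r2: "rel x2 c" "rel x2 d" using X(8,9) x2 cl_iff by blast+
    have rab: "rel a b" using trans[OF sym[OF r1(1)] r1(2)] .
    have rcd: "rel c d" using trans[OF sym[OF r2(1)] r2(2)] .
    have "rel a c"
    proof (rule relI)
      show "a \<in> {1..n}" "c \<in> {1..n}" using relN[OF rab] relN[OF rcd] by auto
      fix Q' assume Q': "Q' \<in> ncset n P"
      obtain C where C: "C \<in> Q'" "a \<in> C" "b \<in> C" using relD[OF rab Q'] by blast
      obtain C' where C': "C' \<in> Q'" "c \<in> C'" "d \<in> C'" using relD[OF rcd Q'] by blast
      have ncQ: "noncrossing Q'" using Q' ncsetD by blast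
      have "C = C'" using noncrossingD[OF ncQ C(1) C'(1) X(3,4,5) C(2,3) C'(2,3)] .
      then show "\<exists>C\<in>Q'. a \<in> C \<and> c \<in> C" using C C' by blast
    qed
    then have "cl a = cl c" by (rule cleq)
    moreover have "cl x1 = cl a" using cleq r1(1) by blast
    moreover have "cl x2 = cl c" using cleq r2(1) by blast
    ultimately show "B1 = B2" using x1 x2 by simp
  qed
  have minimal: "refines Q Q'" if Q': "is_partition n Q'" "noncrossing Q'" "refines P Q'" for Q'
    unfolding refines_alt[OF part Q'(1)]
  proof
    fix B assume "B \<in> Q"
    then obtain x where x: "x \<in> {1..n}" "B = cl x" unfolding Q_def by blast
    obtain C where C: "C \<in> Q'" "x \<in> C" using part_cov[OF Q'(1) x(1)] by blast
    have inQ: "Q' \<in> ncset n P" using Q' unfolding ncset_def by blast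
    have "cl x \<subseteq> C"
    proof
      fix y assume "y \<in> cl x"
      then have "rel x y" using cl_iff by blast
      then obtain C' where C': "C' \<in> Q'" "x \<in> C'" "y \<in> C'" using relD[OF _ inQ] by blast
      have "C' = C" using part_eq[OF Q'(1) C'(1) C(1) C'(2) C(2)] .
      then show "y \<in> C" using C'(3) by simp
    qed
    then show "\<exists>b\<in>Q'. B \<subseteq> b" using C(1) x(2) by blast
  qed
  show ?thesis using part ncr ref minimal by blast
qed

lemma nc_props:
  assumes P: "is_partition n P"
  shows "is_partition n (nc n P) \<and> noncrossing (nc n P) \<and> refines P (nc n P) \<and>
      (\<forall>Q'. is_partition n Q' \<and> noncrossing Q' \<and> refines P Q' \<longrightarrow> refines (nc n P) Q')"
proof -
  obtain Q where Q: "is_partition n Q \<and> noncrossing Q \<and> refines P Q \<and>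
      (\<forall>Q'. is_partition n Q' \<and> noncrossing Q' \<and> refines P Q' \<longrightarrow> refines Q Q')"
    using nc_exists[OF P] by blast
  have "nc n P = Q" unfolding nc_def
    apply (rule the_equality)
     apply (rule Q)
    using Q refines_antisym by blast
  then show ?thesis using Q by simp
qed

lemma nc_eq:
  assumes P: "is_partition n P" and Q: "is_partition n Q" "noncrossing Q" "refines P Q"
    and m: "\<And>Q'. is_partition n Q' \<Longrightarrow> noncrossing Q' \<Longrightarrow> refines P Q' \<Longrightarrow> refines Q Q'"
  shows "nc n P = Q"
proof -
  have "refines (nc n P) Q" "refines Q (nc n P)" using nc_props[OF P] Q m by blast+
  then show ?thesis using refines_antisym Q nc_props[OF P] by blast
qed

lemma refines_refl: "refines P P" unfolding refines_def by (metis Union_empty Union_insert empty_subsetI insert_subset sup_bot.right_neutral)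

lemma nc_id: "is_partition n P \<Longrightarrow> noncrossing P \<Longrightarrow> nc n P = P"
  by (rule nc_eq) (auto simp: refines_refl)



definition img :: "(nat \<Rightarrow> nat) \<Rightarrow> nat set set \<Rightarrow> nat set set" where
  "img f P = (\<lambda>B. f ` B) ` P"


definition pull :: "(nat \<Rightarrow> nat) \<Rightarrow> nat \<Rightarrow> nat set set \<Rightarrow> nat set set" where
  "pull h k R = (\<lambda>C. h -` C \<inter> {1..k}) ` R - {{}}"

lemma pull_part:
  assumes h: "inj h" and rng: "h ` {1..k} \<subseteq> {1..N}" and R: "is_partition N R"
  shows "is_partition k (pull h k R)"
  unfolding is_partition_def
proof (intro conjI)
  show "\<forall>B\<in>pull h k R. B \<noteq> {}" unfolding pull_def by blast
  show "\<forall>B\<in>pull h k R. \<forall>C\<in>pull h k R. B \<noteq> C \<longrightarrow> B \<inter> C = {}"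
  proof (intro ballI impI)
    fix B C assume B: "B \<in> pull h k R" and C: "C \<in> pull h k R" and ne: "B \<noteq> C"
    obtain B' where B': "B' \<in> R" "B = h -` B' \<inter> {1..k}" using B unfolding pull_def by blast
    obtain C' where C': "C' \<in> R" "C = h -` C' \<inter> {1..k}" using C unfolding pull_def by blast
    show "B \<inter> C = {}"
    proof (rule ccontr)
      assume "B \<inter> C \<noteq> {}"
      then obtain x where "x \<in> B" "x \<in> C" by blast
      then have "h x \<in> B'" "h x \<in> C'" using B' C' by auto
      then have "B' = C'" using part_eq[OF R B'(1) C'(1)] by blast
      then show False using ne B' C' by simp
    qed
  qed
  show "\<Union>(pull h k R) = {1..k}"
  proof
    show "\<Union>(pull h k R) \<subseteq> {1..k}" unfolding pull_def by blast
    show "{1..k} \<subseteq> \<Union>(pull h k R)"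
    proof
      fix x assume x: "x \<in> {1..k}"
      then have "h x \<in> {1..N}" using rng by blast
      then obtain C where C: "C \<in> R" "h x \<in> C" using part_cov[OF R] by blast
      then have "x \<in> h -` C \<inter> {1..k}" using x by simp
      then show "x \<in> \<Union>(pull h k R)" unfolding pull_def using C(1) by blast
    qed
  qed
qed

lemma pull_nc:
  assumes h: "strict_mono h" and R: "noncrossing R"
  shows "noncrossing (pull h k R)"
proof (rule noncrossingI)
  fix B1 B2 a b c d assume X: "B1 \<in> pull h k R" "B2 \<in> pull h k R"
      "a < c" "c < b" "b < d" "a \<in> B1" "b \<in> B1" "c \<in> B2" "d \<in> B2"
  obtain C1 where C1: "C1 \<in> R" "B1 = h -` C1 \<inter> {1..k}" using X(1) unfolding pull_def by blast
  obtain C2 where C2: "C2 \<in> R" "B2 = h -` C2 \<inter> {1..k}" using X(2) unfolding pull_def by blast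
  have "h a < h c" "h c < h b" "h b < h d" using X(3-5) h by (auto simp: strict_mono_less)
  moreover have "h a \<in> C1" "h b \<in> C1" "h c \<in> C2" "h d \<in> C2" using X(6-9) C1 C2 by auto
  ultimately have "C1 = C2" using noncrossingD[OF R C1(1) C2(1)] by blast
  then show "B1 = B2" using C1 C2 by simp
qed

lemma pull_in:
  assumes "B \<subseteq> {1..k}" "B \<noteq> {}" "h ` B \<subseteq> C" "C \<in> R"
  shows "\<exists>D\<in>pull h k R. B \<subseteq> D"
proof -
  have "B \<subseteq> h -` C \<inter> {1..k}" using assms by blast
  moreover have "h -` C \<inter> {1..k} \<in> pull h k R" unfolding pull_def using assms by blast
  ultimately show ?thesis by blast
qed

lemma pull_out:
  assumes "D \<in> pull h k R" shows "\<exists>C\<in>R. h ` D \<subseteq> C"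
  using assms unfolding pull_def by blast

lemma img_mono:
  assumes "is_partition k P" "is_partition k P'" "refines P P'"
    "is_partition l Q" "is_partition l Q'" "refines Q Q'"
    "is_partition N X" "is_partition N Y"
    "X = img f P \<union> img g Q" "Y = img f P' \<union> img g Q'"
  shows "refines X Y"
proof -
  have a: "\<forall>a\<in>P. \<exists>b\<in>P'. a \<subseteq> b" using refines_alt assms(1-3) by blast
  have b: "\<forall>a\<in>Q. \<exists>b\<in>Q'. a \<subseteq> b" using refines_alt assms(4-6) by blast
  have "\<forall>a\<in>X. \<exists>b\<in>Y. a \<subseteq> b"
  proof
    fix x assume "x \<in> X"
    then have "x \<in> img f P \<or> x \<in> img g Q" using assms(9) by blast
    then show "\<exists>b\<in>Y. x \<subseteq> b"
    proof
      assume "x \<in> img f P"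
      then obtain B where B: "B \<in> P" "x = f ` B" unfolding img_def by blast
      then obtain B' where "B' \<in> P'" "B \<subseteq> B'" using a by blast
      then have "f ` B' \<in> Y" "x \<subseteq> f ` B'" using B assms(10) unfolding img_def by auto
      then show ?thesis by blast
    next
      assume "x \<in> img g Q"
      then obtain B where B: "B \<in> Q" "x = g ` B" unfolding img_def by blast
      then obtain B' where "B' \<in> Q'" "B \<subseteq> B'" using b by blast
      then have "g ` B' \<in> Y" "x \<subseteq> g ` B'" using B assms(10) unfolding img_def by auto
      then show ?thesis by blast
    qed
  qed
  then show ?thesis using refines_alt assms(7,8) by blast
qed

locale twomap =
  fixes f g :: "nat \<Rightarrow> nat" and k l N :: nat
  assumes f: "strict_mono f" and g: "strict_mono g"
    and disj: "f ` {1..k} \<inter> g ` {1..l} = {}"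
    and un: "f ` {1..k} \<union> g ` {1..l} = {1..N}"
    and conv: "\<And>x y z. x \<in> g ` {1..l} \<Longrightarrow> z \<in> g ` {1..l} \<Longrightarrow> x < y \<Longrightarrow> y < z \<Longrightarrow> y \<in> g ` {1..l}"
begin

lemma finj: "inj f" using f strict_mono_imp_inj_on by blast
lemma ginj: "inj g" using g strict_mono_imp_inj_on by blast

lemma comp_part:
  assumes P: "is_partition k P" and Q: "is_partition l Q"
  shows "is_partition N (img f P \<union> img g Q)"
  unfolding is_partition_def
proof (intro conjI)
  show "\<forall>B\<in>img f P \<union> img g Q. B \<noteq> {}"
    unfolding img_def using part_ne[OF P] part_ne[OF Q] by blast
  show "\<Union>(img f P \<union> img g Q) = {1..N}"
  proof -
    have "\<Union>(img f P) = f ` {1..k}" unfolding img_def using P unfolding is_partition_def by blast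
    moreover have "\<Union>(img g Q) = g ` {1..l}" unfolding img_def using Q unfolding is_partition_def by blast
    ultimately show ?thesis using un by simp
  qed
  show "\<forall>B\<in>img f P \<union> img g Q. \<forall>C\<in>img f P \<union> img g Q. B \<noteq> C \<longrightarrow> B \<inter> C = {}"
  proof (intro ballI impI)
    fix B C assume B: "B \<in> img f P \<union> img g Q" and C: "C \<in> img f P \<union> img g Q" and ne: "B \<noteq> C"
    show "B \<inter> C = {}"
    proof (rule ccontr)
      assume "B \<inter> C \<noteq> {}"
      then obtain z where z: "z \<in> B" "z \<in> C" by blast
      have fr: "X \<subseteq> f ` {1..k}" if "X \<in> img f P" for X
        using that part_sub[OF P] unfolding img_def by blast
      have gr: "X \<subseteq> g ` {1..l}" if "X \<in> img g Q" for X
        using that part_sub[OF Q] unfolding img_def by blast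
      have ff: "X = Y" if H: "X \<in> img f P" "Y \<in> img f P" "z \<in> X" "z \<in> Y" for X Y
      proof -
        obtain X' Y' where XY: "X' \<in> P" "Y' \<in> P" "X = f ` X'" "Y = f ` Y'"
          using H(1,2) unfolding img_def by blast
        obtain x' y' where "x' \<in> X'" "y' \<in> Y'" "z = f x'" "z = f y'" using H(3,4) XY by blast
        then have "x' = y'" using finj by (simp add: inj_eq)
        then have "X' = Y'" using part_eq[OF P XY(1,2)] \<open>x' \<in> X'\<close> \<open>y' \<in> Y'\<close> by blast
        then show ?thesis using XY by simp
      qed
      have gg: "X = Y" if H: "X \<in> img g Q" "Y \<in> img g Q" "z \<in> X" "z \<in> Y" for X Y
      proof -
        obtain X' Y' where XY: "X' \<in> Q" "Y' \<in> Q" "X = g ` X'" "Y = g ` Y'"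
          using H(1,2) unfolding img_def by blast
        obtain x' y' where "x' \<in> X'" "y' \<in> Y'" "z = g x'" "z = g y'" using H(3,4) XY by blast
        then have "x' = y'" using ginj by (simp add: inj_eq)
        then have "X' = Y'" using part_eq[OF Q XY(1,2)] \<open>x' \<in> X'\<close> \<open>y' \<in> Y'\<close> by blast
        then show ?thesis using XY by simp
      qed
      show False
        using B C z ne ff gg fr gr disj by blast
    qed
  qed
qed

lemma comp_nc:
  assumes P: "is_partition k P" and Q: "is_partition l Q"
    and nP: "noncrossing P" and nQ: "noncrossing Q"
  shows "noncrossing (img f P \<union> img g Q)"
proof (rule noncrossingI)
  have fr: "X \<subseteq> f ` {1..k}" if "X \<in> img f P" for X
    using that part_sub[OF P] unfolding img_def by blast
  have gr: "X \<subseteq> g ` {1..l}" if "X \<in> img g Q" for X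
    using that part_sub[OF Q] unfolding img_def by blast
  have fmono: "f x < f y \<longleftrightarrow> x < y" for x y using f by (simp add: strict_mono_less)
  have gmono: "g x < g y \<longleftrightarrow> x < y" for x y using g by (simp add: strict_mono_less)
  fix B1 B2 a b c d assume X: "B1 \<in> img f P \<union> img g Q" "B2 \<in> img f P \<union> img g Q"
      "a < c" "c < b" "b < d" "a \<in> B1" "b \<in> B1" "c \<in> B2" "d \<in> B2"
  show "B1 = B2"
  proof (cases "B1 \<in> img f P")
    case True
    note B1 = True
    show ?thesis
    proof (cases "B2 \<in> img f P")
      case True
      obtain X1 X2 where XX: "X1 \<in> P" "X2 \<in> P" "B1 = f ` X1" "B2 = f ` X2"
        using B1 True unfolding img_def by blast
      obtain a' b' c' d' where pre: "a' \<in> X1" "b' \<in> X1" "c' \<in> X2" "d' \<in> X2"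
        "a = f a'" "b = f b'" "c = f c'" "d = f d'" using X(6-9) XX(3,4) by blast
      have "a' < c'" "c' < b'" "b' < d'" using X(3-5) pre(5-8) fmono by auto
      then have "X1 = X2" using noncrossingD[OF nP XX(1,2)] pre(1-4) by blast
      then show ?thesis using XX by simp
    next
      case False
      then have "B2 \<in> img g Q" using X(2) by blast
      then have "c \<in> g ` {1..l}" "d \<in> g ` {1..l}" using gr X(8,9) by blast+
      then have "b \<in> g ` {1..l}" using conv X(4,5) by blast
      moreover have "b \<in> f ` {1..k}" using fr B1 X(7) by blast
      ultimately show ?thesis using disj by blast
    qed
  next
    case False
    then have B1: "B1 \<in> img g Q" using X(1) by blast
    show ?thesis
    proof (cases "B2 \<in> img f P")
      case True
      have "a \<in> g ` {1..l}" "b \<in> g ` {1..l}" using gr B1 X(6,7) by blast+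
      then have "c \<in> g ` {1..l}" using conv X(3,4) by blast
      moreover have "c \<in> f ` {1..k}" using fr True X(8) by blast
      ultimately show ?thesis using disj by blast
    next
      case False
      then have B2: "B2 \<in> img g Q" using X(2) by blast
      obtain X1 X2 where XX: "X1 \<in> Q" "X2 \<in> Q" "B1 = g ` X1" "B2 = g ` X2"
        using B1 B2 unfolding img_def by blast
      obtain a' b' c' d' where pre: "a' \<in> X1" "b' \<in> X1" "c' \<in> X2" "d' \<in> X2"
        "a = g a'" "b = g b'" "c = g c'" "d = g d'" using X(6-9) XX(3,4) by blast
      have "a' < c'" "c' < b'" "b' < d'" using X(3-5) pre(5-8) gmono by auto
      then have "X1 = X2" using noncrossingD[OF nQ XX(1,2)] pre(1-4) by blast
      then show ?thesis using XX by simp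
    qed
  qed
qed


lemma frng: "f ` {1..k} \<subseteq> {1..N}" using un by blast
lemma grng: "g ` {1..l} \<subseteq> {1..N}" using un by blast

lemma comp_nc_eq:
  assumes P: "is_partition k P" and Q: "is_partition l Q"
  shows "nc N (img f P \<union> img g Q) = img f (nc k P) \<union> img g (nc l Q)"
proof -
  note ncP = nc_props[OF P] and ncQ = nc_props[OF Q]
  have P1: "is_partition k (nc k P)" and P2: "noncrossing (nc k P)" and P3: "refines P (nc k P)"
    and P4: "\<And>Q'. is_partition k Q' \<Longrightarrow> noncrossing Q' \<Longrightarrow> refines P Q' \<Longrightarrow> refines (nc k P) Q'"
    using ncP by auto
  have Q1: "is_partition l (nc l Q)" and Q2: "noncrossing (nc l Q)" and Q3: "refines Q (nc l Q)"
    and Q4: "\<And>Q'. is_partition l Q' \<Longrightarrow> noncrossing Q' \<Longrightarrow> refines Q Q' \<Longrightarrow> refines (nc l Q) Q'"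
    using ncQ by auto
  have PQ: "is_partition N (img f P \<union> img g Q)" using comp_part[OF P Q] .
  have NN: "is_partition N (img f (nc k P) \<union> img g (nc l Q))"
    using comp_part[OF P1 Q1] .
  show ?thesis
  proof (rule nc_eq[OF PQ NN])
    show "noncrossing (img f (nc k P) \<union> img g (nc l Q))" using comp_nc[OF P1 Q1 P2 Q2] .
    show "refines (img f P \<union> img g Q) (img f (nc k P) \<union> img g (nc l Q))"
      by (rule img_mono[OF P P1 P3 Q Q1 Q3 PQ NN refl refl])
    fix R assume R: "is_partition N R" "noncrossing R" "refines (img f P \<union> img g Q) R"
    have sub: "\<forall>a\<in>img f P \<union> img g Q. \<exists>b\<in>R. a \<subseteq> b" using refines_alt[OF PQ R(1)] R(3) by blast
    have pf: "is_partition k (pull f k R)" using pull_part[OF finj frng R(1)] .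
    have pg: "is_partition l (pull g l R)" using pull_part[OF ginj grng R(1)] .
    have nf: "noncrossing (pull f k R)" using pull_nc[OF f R(2)] .
    have ng: "noncrossing (pull g l R)" using pull_nc[OF g R(2)] .
    have rf: "refines P (pull f k R)" unfolding refines_alt[OF P pf]
    proof
      fix B assume B: "B \<in> P"
      then have "f ` B \<in> img f P \<union> img g Q" unfolding img_def by blast
      then obtain C where C: "C \<in> R" "f ` B \<subseteq> C" using sub by blast
      show "\<exists>D\<in>pull f k R. B \<subseteq> D" using pull_in[OF part_sub[OF P B] part_ne[OF P B] C(2) C(1)] .
    qed
    have rg: "refines Q (pull g l R)" unfolding refines_alt[OF Q pg]
    proof
      fix B assume B: "B \<in> Q"
      then have "g ` B \<in> img f P \<union> img g Q" unfolding img_def by blast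
      then obtain C where C: "C \<in> R" "g ` B \<subseteq> C" using sub by blast
      show "\<exists>D\<in>pull g l R. B \<subseteq> D" using pull_in[OF part_sub[OF Q B] part_ne[OF Q B] C(2) C(1)] .
    qed
    have mf: "refines (nc k P) (pull f k R)" using P4[OF pf nf rf] .
    have mg: "refines (nc l Q) (pull g l R)" using Q4[OF pg ng rg] .
    have af: "\<forall>a\<in>nc k P. \<exists>b\<in>pull f k R. a \<subseteq> b" using refines_alt[OF P1 pf] mf by blast
    have ag: "\<forall>a\<in>nc l Q. \<exists>b\<in>pull g l R. a \<subseteq> b" using refines_alt[OF Q1 pg] mg by blast
    have "\<forall>a\<in>img f (nc k P) \<union> img g (nc l Q). \<exists>b\<in>R. a \<subseteq> b"
    proof
      fix x assume "x \<in> img f (nc k P) \<union> img g (nc l Q)"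
      then have "x \<in> img f (nc k P) \<or> x \<in> img g (nc l Q)" by blast
      then show "\<exists>b\<in>R. x \<subseteq> b"
      proof
        assume "x \<in> img f (nc k P)"
        then obtain B where B: "B \<in> nc k P" "x = f ` B" unfolding img_def by blast
        then obtain D where D: "D \<in> pull f k R" "B \<subseteq> D" using af by blast
        then obtain C where "C \<in> R" "f ` D \<subseteq> C" using pull_out by blast
        then show ?thesis using B(2) D(2) by blast
      next
        assume "x \<in> img g (nc l Q)"
        then obtain B where B: "B \<in> nc l Q" "x = g ` B" unfolding img_def by blast
        then obtain D where D: "D \<in> pull g l R" "B \<subseteq> D" using ag by blast
        then obtain C where "C \<in> R" "g ` D \<subseteq> C" using pull_out by blast
        then show ?thesis using B(2) D(2) by blast
      qed
    qed
    then show "refines (img f (nc k P) \<union> img g (nc l Q)) R" using refines_alt[OF NN R(1)] by blast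
  qed
qed
end


lemma SP_comp_img: "SP_comp P i n Q = img (\<lambda>p. if p < i then p else p + n - 1) P \<union> img (\<lambda>r. r + i - 1) Q"
  unfolding SP_comp_def img_def by simp

lemma tm:
  assumes i1: "1 \<le> i" and im: "i \<le> m" and n1: "1 \<le> n"
  shows "twomap (\<lambda>p. if p < i then p else p + n - 1) (\<lambda>r. r + i - 1) (m-1) (n-1) (m+n-1-1)"
proof
  let ?f = "\<lambda>p. if p < i then p else p + n - 1"
  let ?g = "\<lambda>r::nat. r + i - 1"
  show "strict_mono ?f" unfolding strict_mono_def using n1 by auto
  show "strict_mono ?g" unfolding strict_mono_def using i1 by auto
  have grng: "?g ` {1..n-1} = {i..i+n-2}"
  proof
    show "?g ` {1..n-1} \<subseteq> {i..i+n-2}" using i1 n1 by auto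
    show "{i..i+n-2} \<subseteq> ?g ` {1..n-1}"
    proof
      fix x assume x: "x \<in> {i..i+n-2}"
      then have "x = ?g (x - i + 1)" "x - i + 1 \<in> {1..n-1}" using i1 n1 by auto
      then show "x \<in> ?g ` {1..n-1}" by (rule image_eqI)
    qed
  qed
  show "?f ` {1..m-1} \<inter> ?g ` {1..n-1} = {}"
    unfolding grng using n1 by auto
  show "?f ` {1..m-1} \<union> ?g ` {1..n-1} = {1..m+n-1-1}"
  proof
    show "?f ` {1..m-1} \<union> ?g ` {1..n-1} \<subseteq> {1..m+n-1-1}"
      unfolding grng using n1 im i1 by auto
    show "{1..m+n-1-1} \<subseteq> ?f ` {1..m-1} \<union> ?g ` {1..n-1}"
    proof
      fix x assume x: "x \<in> {1..m+n-1-1}"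
      consider "x < i" | "i \<le> x \<and> x \<le> i+n-2" | "i+n-2 < x" by linarith
      then show "x \<in> ?f ` {1..m-1} \<union> ?g ` {1..n-1}"
      proof cases
        case 1
        then have "x = ?f x" "x \<in> {1..m-1}" using x im by auto
        then show ?thesis by blast
      next
        case 2
        then show ?thesis unfolding grng by auto
      next
        case 3
        then have "x = ?f (x - n + 1)" "x - n + 1 \<in> {1..m-1}" using x im n1 i1 by auto
        then show ?thesis by blast
      qed
    qed
  qed
  show "y \<in> ?g ` {1..n-1}" if "x \<in> ?g ` {1..n-1}" "z \<in> ?g ` {1..n-1}" "x < y" "y < z" for x y z
    using that unfolding grng by auto
qed

theorem mainTheorem2:
  shows
    \<comment> \<open>the inclusion i : NCP \<rightarrow> SP is a morphism of operads (NCP contains the unit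
        and is closed under the partial compositions of SP)\<close>
    "(SP_unit \<in> NCP 1 \<and>
      (\<forall>m n i P Q. P \<in> NCP m \<and> Q \<in> NCP n \<and> 1 \<le> i \<and> i \<le> m \<longrightarrow>
          SP_comp P i n Q \<in> NCP (m + n - 1)))
   \<and>
    \<comment> \<open>nc : SP \<rightarrow> NCP is a morphism of operads\<close>
    ((\<forall>m P. P \<in> SP m \<longrightarrow> nc_op m P \<in> NCP m) \<and>
     nc_op 1 SP_unit = SP_unit \<and>
     (\<forall>m n i P Q. P \<in> SP m \<and> Q \<in> SP n \<and> 1 \<le> i \<and> i \<le> m \<longrightarrow>
          nc_op (m + n - 1) (SP_comp P i n Q) = SP_comp (nc_op m P) i n (nc_op n Q)))
   \<and>
    \<comment> \<open>nc \<circ> i = Id\<close>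
    (\<forall>m P. P \<in> NCP m \<longrightarrow> nc_op m P = P)"
proof (intro conjI allI impI)
  show "SP_unit \<in> NCP 1"
    unfolding SP_unit_def NCP_def SP_def is_partition_def noncrossing_def by simp
  have u: "is_partition 0 {}" "noncrossing {}" unfolding is_partition_def noncrossing_def by simp_all
  show "nc_op 1 SP_unit = SP_unit" unfolding nc_op_def SP_unit_def using nc_id[OF u] by simp
  fix m n i P Q
  assume H: "P \<in> NCP m \<and> Q \<in> NCP n \<and> 1 \<le> i \<and> i \<le> m"
  then have m1: "1 \<le> m" and n1: "1 \<le> n" and i: "1 \<le> i" "i \<le> m"
    and P: "is_partition (m-1) P" and Q: "is_partition (n-1) Q"
    and nP: "noncrossing P" and nQ: "noncrossing Q"
    unfolding NCP_def SP_def by auto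
  interpret twomap "\<lambda>p. if p < i then p else p + n - 1" "\<lambda>r. r + i - 1" "m-1" "n-1" "m+n-1-1"
    using tm[OF i n1] .
  show "SP_comp P i n Q \<in> NCP (m + n - 1)"
    unfolding NCP_def SP_def SP_comp_img using comp_part[OF P Q] comp_nc[OF P Q nP nQ] m1 n1 by simp
next
  fix m P assume "P \<in> SP m"
  then have "1 \<le> m" "is_partition (m-1) P" unfolding SP_def by auto
  then show "nc_op m P \<in> NCP m" unfolding nc_op_def NCP_def SP_def using nc_props by blast
next
  fix m n i P Q
  assume H: "P \<in> SP m \<and> Q \<in> SP n \<and> 1 \<le> i \<and> i \<le> m"
  then have m1: "1 \<le> m" and n1: "1 \<le> n" and i: "1 \<le> i" "i \<le> m"
    and P: "is_partition (m-1) P" and Q: "is_partition (n-1) Q"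
    unfolding SP_def by auto
  interpret twomap "\<lambda>p. if p < i then p else p + n - 1" "\<lambda>r. r + i - 1" "m-1" "n-1" "m+n-1-1"
    using tm[OF i n1] .
  show "nc_op (m + n - 1) (SP_comp P i n Q) = SP_comp (nc_op m P) i n (nc_op n Q)"
    unfolding nc_op_def SP_comp_img using comp_nc_eq[OF P Q] by simp
next
  fix m P assume "P \<in> NCP m"
  then have "is_partition (m-1) P" "noncrossing P" unfolding NCP_def SP_def by auto
  then show "nc_op m P = P" unfolding nc_op_def using nc_id by blast
qed

end
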